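(* Let $f:\mathbb{R}^d\to\mathbb{R}$ be differentiable and attain its minimum value $f^*$. Consider the iteration (scaled sign gradient descent) \[ x_{k+1}=x_k-\alpha\|g_k\|_1\operatorname{sign}(g_k),\qquad g_k:=\nabla f(x_k),\qquad k=0,1,2,\ldots, \] with constant learning rate $\alpha>0$ and arbitrary $x_0\in\mathbb{R}^d$. Suppose $f$ is $L$-smooth with respect to the $\ell_\infty$-norm, i.e. $\|\nabla f(x)-\nabla f(y)\|_1\le L\|x-y\|_\infty$ for all $x,y\in\mathbb{R}^d$, for some $L>0$. Then: \begin{enumerate} \item If in addition $f$ is $\mu$-strongly convex with respect to the $\ell_\infty$-norm for some $\mu>0$, i.e. $f(x)-f(y)\ge \nabla f(y)^\top(x-y)+\frac{\mu}{2}\|x-y\|_\infty^2$ for all $x,y$, and $0<\alpha<\frac{2}{L}$, then for all $k\ge 0$, \[ f(x_k)-f^*\le \zeta^k\,(f(x_0)-f^* ),\qquad \zeta:=1-2\mu\alpha\Big(1-\frac{L\alpha}{2}\Big)\in[0,1). \] \item If instead $f$ satisfies the Polyak–Łojasiewicz inequality $\|\nabla f(x)\|_1^2\ge 2\mu(f(x)-f^* )$ for all $x\in\mathbb{R}^d$, for some $\mu>0$, and $0<\alpha<\frac{2}{L}$, then the same bound $f(x_k)-f^*\le \zeta^k(f(x_0)-f^* )$ with the same $\zeta$ holds for all $k\ge0$. \item With only the $\ell_\infty$-smoothness assumption, for all $k\ge 0$, \[ \min_{l\in\{0,1,\ldots,k\}}\|g_l\|_1^2\le \frac{f(x_0)-f^*}{\gamma(k+1)},\qquad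 \gamma:=\alpha\Big(1-\frac{L\alpha}{2}\Big). \] \end{enumerate}
   Context: $\operatorname{sign}$ is applied componentwise; $\|\cdot\|_1$ and $\|\cdot\|_\infty$ denote the $\ell_1$- and $\ell_\infty$-norms on $\mathbb{R}^d$. *)

theory Defs
  imports "HOL-Analysis.Analysis"
begin

text \<open>Vectors in R^d are modelled as real^'n, with d = CARD('n).\<close>

definition norm1 :: "real ^ 'n \<Rightarrow> real" where
  "norm1 x = (\<Sum>i\<in>UNIV. \<bar>x $ i\<bar>)"

definition norminf :: "real ^ 'n \<Rightarrow> real" where
  "norminf x = Max (range (\<lambda>i. \<bar>x $ i\<bar>))"

definition sgnv :: "real ^ 'n \<Rightarrow> real ^ 'n" where
  "sgnv x = (\<chi> i. sgn (x $ i))"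

end

theory Submission imports Defs begin

lemma norminf_ge: "\<bar>h $ i\<bar> \<le> norminf h"
  unfolding norminf_def by (rule Max_ge) auto

lemma norminf_ex: "\<exists>i. norminf h = \<bar>h $ i\<bar>"
proof -
  have "norminf h \<in> range (\<lambda>i. \<bar>h $ i\<bar>)" unfolding norminf_def by (rule Max_in) auto
  then show ?thesis by auto
qed

lemma norminf_nonneg: "0 \<le> norminf h"
  using norminf_ge[of h] abs_ge_zero order_trans by blast

lemma norminf_le: "(\<And>i. \<bar>h $ i\<bar> \<le> B) \<Longrightarrow> norminf h \<le> B"
  using norminf_ex[of h] by metis

lemma norminf_scale: "norminf (c *\<^sub>R h) = \<bar>c\<bar> * norminf h"
proof (rule antisym)
  show "norminf (c *\<^sub>R h) \<le> \<bar>c\<bar> * norminf h"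
    by (rule norminf_le) (simp add: abs_mult mult_left_mono norminf_ge)
  obtain j where j: "norminf h = \<bar>h $ j\<bar>" using norminf_ex by blast
  have "\<bar>c\<bar> * \<bar>h $ j\<bar> = \<bar>(c *\<^sub>R h) $ j\<bar>" by (simp add: abs_mult)
  also have "\<dots> \<le> norminf (c *\<^sub>R h)" by (rule norminf_ge)
  finally show "\<bar>c\<bar> * norminf h \<le> norminf (c *\<^sub>R h)" using j by simp
qed

lemma inner_le: "\<bar>a \<bullet> h\<bar> \<le> norm1 a * norminf h"
proof -
  have "\<bar>a \<bullet> h\<bar> = \<bar>\<Sum>i\<in>UNIV. a $ i * h $ i\<bar>" by (simp add: inner_vec_def)
  also have "\<dots> \<le> (\<Sum>i\<in>UNIV. \<bar>a $ i\<bar> * norminf h)"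
    by (rule order_trans[OF sum_abs]) (intro sum_mono, simp add: abs_mult mult_left_mono norminf_ge)
  also have "\<dots> = norm1 a * norminf h" by (simp add: norm1_def sum_distrib_right)
  finally show ?thesis .
qed

lemma descent:
  fixes f :: "real ^ 'n \<Rightarrow> real" and g :: "real ^ 'n \<Rightarrow> real ^ 'n"
  assumes grad: "\<And>y. (f has_derivative (\<lambda>h. g y \<bullet> h)) (at y)"
    and L: "L \<ge> 0"
    and smooth: "\<And>y z. norm1 (g y - g z) \<le> L * norminf (y - z)"
  shows "f (y + h) \<le> f y + g y \<bullet> h + L / 2 * (norminf h)\<^sup>2"
proof -
  define N where "N = norminf h"
  define \<phi> where "\<phi> t = f (y + t *\<^sub>R h) - t * (g y \<bullet> h) - L / 2 * t\<^sup>2 * N\<^sup>2" for t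
  have d: "(\<phi> has_real_derivative (g (y + t *\<^sub>R h) \<bullet> h - g y \<bullet> h - L * t * N\<^sup>2)) (at t)" for t
  proof -
    have c: "((\<lambda>t. f (y + t *\<^sub>R h)) has_derivative (\<lambda>s. g (y + t *\<^sub>R h) \<bullet> (s *\<^sub>R h))) (at t)"
      by (rule has_derivative_compose[OF _ grad, where f="\<lambda>t. y + t *\<^sub>R h", simplified])
         (auto intro!: derivative_eq_intros)
    have "((\<lambda>t. f (y + t *\<^sub>R h)) has_real_derivative (g (y + t *\<^sub>R h) \<bullet> h)) (at t)"
      using c unfolding has_field_derivative_def by (simp add: mult.commute[of _ "g (y + t *\<^sub>R h) \<bullet> h"])
    then show ?thesis unfolding \<phi>_def
      by (auto intro!: derivative_eq_intros simp: power2_eq_square)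
  qed
  obtain z where z: "0 < z" "z < 1" and eq: "\<phi> 1 - \<phi> 0 = (1 - 0) * (g (y + z *\<^sub>R h) \<bullet> h - g y \<bullet> h - L * z * N\<^sup>2)"
    using MVT2[of 0 1 \<phi>, OF _ d] by auto
  have "g (y + z *\<^sub>R h) \<bullet> h - g y \<bullet> h = (g (y + z *\<^sub>R h) - g y) \<bullet> h" by (simp add: inner_diff_left)
  also have "\<dots> \<le> norm1 (g (y + z *\<^sub>R h) - g y) * N" unfolding N_def using inner_le abs_le_D1 by blast
  also have "\<dots> \<le> L * norminf (z *\<^sub>R h) * N"
    using smooth[of "y + z *\<^sub>R h" y] by (simp add: N_def mult_right_mono norminf_nonneg)
  also have "\<dots> = L * z * N\<^sup>2" using z by (simp add: norminf_scale N_def power2_eq_square)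
  finally have "\<phi> 1 \<le> \<phi> 0" using eq by simp
  then show ?thesis unfolding \<phi>_def N_def by simp
qed

lemma sgn_step:
  fixes a :: "real ^ 'n"
  shows "a \<bullet> (c *\<^sub>R sgnv a) = c * norm1 a" and "norminf (c *\<^sub>R sgnv a) \<le> \<bar>c\<bar>"
proof -
  show "a \<bullet> (c *\<^sub>R sgnv a) = c * norm1 a"
    by (simp add: inner_vec_def sgnv_def norm1_def sum_distrib_left mult.left_commute abs_sgn)
  show "norminf (c *\<^sub>R sgnv a) \<le> \<bar>c\<bar>"
    by (rule norminf_le) (simp add: sgnv_def abs_mult sgn_real_def)
qed

theorem theorem1:
  fixes f :: "real ^ 'n \<Rightarrow> real"
    and g :: "real ^ 'n \<Rightarrow> real ^ 'n"
    and x :: "nat \<Rightarrow> real ^ 'n"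
    and fstar \<alpha> L :: real
  assumes grad: "\<And>y. (f has_derivative (\<lambda>h. g y \<bullet> h)) (at y)"
    and fstar_min: "\<And>y. fstar \<le> f y"
    and fstar_attained: "\<exists>xs. f xs = fstar"
    and L_pos: "L > 0"
    and smooth: "\<And>y z. norm1 (g y - g z) \<le> L * norminf (y - z)"
    and alpha_pos: "\<alpha> > 0"
    and alpha_lt: "\<alpha> < 2 / L"
    and iter: "\<And>k. x (Suc k) = x k - (\<alpha> * norm1 (g (x k))) *\<^sub>R sgnv (g (x k))"
  shows
    "(\<forall>\<mu>::real. \<mu> > 0 \<longrightarrow>
        (\<forall>y z. f y - f z \<ge> g z \<bullet> (y - z) + \<mu> / 2 * (norminf (y - z))\<^sup>2) \<longrightarrow>
        (let \<zeta> = 1 - 2 * \<mu> * \<alpha> * (1 - L * \<alpha> / 2) in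
          0 \<le> \<zeta> \<and> \<zeta> < 1 \<and>
          (\<forall>k. f (x k) - fstar \<le> \<zeta> ^ k * (f (x 0) - fstar))))
   \<and> (\<forall>\<mu>::real. \<mu> > 0 \<longrightarrow>
        (\<forall>y. (norm1 (g y))\<^sup>2 \<ge> 2 * \<mu> * (f y - fstar)) \<longrightarrow>
        (let \<zeta> = 1 - 2 * \<mu> * \<alpha> * (1 - L * \<alpha> / 2) in
          \<zeta> < 1 \<and>
          (\<forall>k. f (x k) - fstar \<le> \<zeta> ^ k * (f (x 0) - fstar))))
   \<and> (let \<gamma> = \<alpha> * (1 - L * \<alpha> / 2) in
        \<forall>k. Min ((\<lambda>l. (norm1 (g (x l)))\<^sup>2) ` {0..k})
              \<le> (f (x 0) - fstar) / (\<gamma> * real (k + 1)))"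
proof -
  define \<gamma> where "\<gamma> = \<alpha> * (1 - L * \<alpha> / 2)"
  have La: "L * \<alpha> < 2" using alpha_lt L_pos by (simp add: field_simps)
  have gpos: "\<gamma> > 0" unfolding \<gamma>_def using La alpha_pos by simp
  have desc: "f y' \<le> f y + g y \<bullet> (y' - y) + L / 2 * (norminf (y' - y))\<^sup>2" for y y'
    using descent[OF grad _ smooth, of y "y' - y"] L_pos by simp
  have step: "f (x (Suc k)) \<le> f (x k) - \<gamma> * (norm1 (g (x k)))\<^sup>2" for k
  proof -
    define n where "n = norm1 (g (x k))"
    have n0: "n \<ge> 0" unfolding n_def norm1_def by (simp add: sum_nonneg)
    have hd: "x (Suc k) - x k = (- (\<alpha> * n)) *\<^sub>R sgnv (g (x k))" using iter[of k] n_def by simp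
    have i: "g (x k) \<bullet> (x (Suc k) - x k) = - (\<alpha> * n) * n" unfolding hd sgn_step(1) n_def ..
    have "norminf (x (Suc k) - x k) \<le> \<alpha> * n" unfolding hd
      using sgn_step(2)[of "- (\<alpha> * n)" "g (x k)"] alpha_pos n0 by simp
    then have "(norminf (x (Suc k) - x k))\<^sup>2 \<le> (\<alpha> * n)\<^sup>2"
      by (intro power_mono norminf_nonneg)
    then have "L / 2 * (norminf (x (Suc k) - x k))\<^sup>2 \<le> L / 2 * (\<alpha> * n)\<^sup>2"
      using L_pos by (intro mult_left_mono) auto
    then have "f (x (Suc k)) \<le> f (x k) - \<alpha> * n * n + L / 2 * (\<alpha> * n)\<^sup>2"
      using desc[of "x (Suc k)" "x k"] i by simp
    then show ?thesis unfolding \<gamma>_def n_def[symmetric] by (simp add: algebra_simps power2_eq_square)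
  qed
  have PLpart: "\<forall>k. f (x k) - fstar \<le> (1 - 2 * \<mu> * \<gamma>) ^ k * (f (x 0) - fstar)"
    if mu: "\<mu> > 0" and PL: "\<forall>y. (norm1 (g y))\<^sup>2 \<ge> 2 * \<mu> * (f y - fstar)" for \<mu>
  proof -
    define \<zeta> where "\<zeta> = 1 - 2 * \<mu> * \<gamma>"
    have rec: "f (x (Suc k)) - fstar \<le> \<zeta> * (f (x k) - fstar)" for k
    proof -
      have "\<gamma> * (2 * \<mu> * (f (x k) - fstar)) \<le> \<gamma> * (norm1 (g (x k)))\<^sup>2"
        using PL gpos by (intro mult_left_mono) auto
      then show ?thesis using step[of k] unfolding \<zeta>_def by (simp add: algebra_simps)
    qed
    show ?thesis
    proof (cases "\<zeta> \<ge> 0")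
      case True
      show ?thesis
      proof
        fix k show "f (x k) - fstar \<le> (1 - 2 * \<mu> * \<gamma>) ^ k * (f (x 0) - fstar)"
        proof (induction k)
          case (Suc k)
          have "f (x (Suc k)) - fstar \<le> \<zeta> * (f (x k) - fstar)" by (rule rec)
          also have "\<dots> \<le> \<zeta> * (\<zeta> ^ k * (f (x 0) - fstar))"
            using Suc True unfolding \<zeta>_def by (intro mult_left_mono) auto
          finally show ?case unfolding \<zeta>_def by simp
        qed simp
      qed
    next
      case False
      have "0 \<le> f (x 1) - fstar" using fstar_min by simp
      also have "\<dots> \<le> \<zeta> * (f (x 0) - fstar)" using rec[of 0] by simp
      finally have nn: "0 \<le> \<zeta> * (f (x 0) - fstar)" .
      have "f (x 0) - fstar \<le> 0"
      proof (rule ccontr)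
        assume "\<not> f (x 0) - fstar \<le> 0"
        then have "\<zeta> * (f (x 0) - fstar) < 0" using False by (simp add: mult_neg_pos)
        then show False using nn by linarith
      qed
      then have f0: "f (x 0) = fstar" using fstar_min[of "x 0"] by simp
      have mono: "f (x k) \<le> f (x 0)" for k
      proof (induction k)
        case (Suc k)
        have "\<gamma> * (norm1 (g (x k)))\<^sup>2 \<ge> 0" using gpos by simp
        then show ?case using step[of k] Suc by simp
      qed simp
      show ?thesis
      proof
        fix k
        have "f (x k) = fstar" using mono[of k] fstar_min[of "x k"] f0 by linarith
        then show "f (x k) - fstar \<le> (1 - 2 * \<mu> * \<gamma>) ^ k * (f (x 0) - fstar)" using f0 by simp
      qed
    qed
  qed
  have part2: "(\<forall>\<mu>::real. \<mu> > 0 \<longrightarrow>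
        (\<forall>y. (norm1 (g y))\<^sup>2 \<ge> 2 * \<mu> * (f y - fstar)) \<longrightarrow>
        (let \<zeta> = 1 - 2 * \<mu> * \<alpha> * (1 - L * \<alpha> / 2) in
          \<zeta> < 1 \<and>
          (\<forall>k. f (x k) - fstar \<le> \<zeta> ^ k * (f (x 0) - fstar))))"
  proof (intro allI impI)
    fix \<mu> :: real assume mu: "\<mu> > 0" and PL: "\<forall>y. (norm1 (g y))\<^sup>2 \<ge> 2 * \<mu> * (f y - fstar)"
    have e: "1 - 2 * \<mu> * \<alpha> * (1 - L * \<alpha> / 2) = 1 - 2 * \<mu> * \<gamma>" unfolding \<gamma>_def by simp
    show "let \<zeta> = 1 - 2 * \<mu> * \<alpha> * (1 - L * \<alpha> / 2) in
          \<zeta> < 1 \<and> (\<forall>k. f (x k) - fstar \<le> \<zeta> ^ k * (f (x 0) - fstar))"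
      unfolding e Let_def using PLpart[OF mu PL] mu gpos by simp
  qed
  have part1: "(\<forall>\<mu>::real. \<mu> > 0 \<longrightarrow>
        (\<forall>y z. f y - f z \<ge> g z \<bullet> (y - z) + \<mu> / 2 * (norminf (y - z))\<^sup>2) \<longrightarrow>
        (let \<zeta> = 1 - 2 * \<mu> * \<alpha> * (1 - L * \<alpha> / 2) in
          0 \<le> \<zeta> \<and> \<zeta> < 1 \<and>
          (\<forall>k. f (x k) - fstar \<le> \<zeta> ^ k * (f (x 0) - fstar))))"
  proof (intro allI impI)
    fix \<mu> :: real assume mu: "\<mu> > 0" and SC: "\<forall>y z. f y - f z \<ge> g z \<bullet> (y - z) + \<mu> / 2 * (norminf (y - z))\<^sup>2"
    have e: "1 - 2 * \<mu> * \<alpha> * (1 - L * \<alpha> / 2) = 1 - 2 * \<mu> * \<gamma>" unfolding \<gamma>_def by simp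
    obtain xs where xs: "f xs = fstar" using fstar_attained by blast
    have PL: "\<forall>y. (norm1 (g y))\<^sup>2 \<ge> 2 * \<mu> * (f y - fstar)"
    proof
      fix y
      define t where "t = norminf (xs - y)"
      define n where "n = norm1 (g y)"
      have "g y \<bullet> (xs - y) \<ge> - (n * t)" using inner_le[of "g y" "xs - y"] unfolding n_def t_def by linarith
      then have "fstar - f y \<ge> - (n * t) + \<mu> / 2 * t\<^sup>2" using SC[rule_format, of y xs] xs unfolding t_def by linarith
      moreover have "- (n * t) + \<mu> / 2 * t\<^sup>2 \<ge> - n\<^sup>2 / (2 * \<mu>)"
      proof -
        have "0 \<le> (\<mu> * t - n)\<^sup>2" by simp
        then have "0 \<le> \<mu>\<^sup>2 * t\<^sup>2 - 2 * \<mu> * n * t + n\<^sup>2" by (simp add: power2_eq_square algebra_simps)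
        then show ?thesis using mu by (simp add: field_simps power2_eq_square)
      qed
      ultimately have "fstar - f y \<ge> - n\<^sup>2 / (2 * \<mu>)" by linarith
      then show "(norm1 (g y))\<^sup>2 \<ge> 2 * \<mu> * (f y - fstar)" using mu unfolding n_def[symmetric]
        by (simp add: field_simps)
    qed
    define one :: "real ^ 'n" where "one = (\<chi> i. 1)"
    have n1: "norminf one = 1"
    proof -
      obtain i where "norminf one = \<bar>one $ i\<bar>" using norminf_ex by blast
      then show ?thesis by (simp add: one_def)
    qed
    have "\<mu> / 2 \<le> L / 2"
      using SC[rule_format, of xs "xs + one"] desc[of "xs + one" xs] n1 by simp
    then have muL: "\<mu> \<le> L" by simp
    have "\<gamma> \<le> 1 / (2 * L)"
    proof -
      have "0 \<le> (L * \<alpha> - 1)\<^sup>2" by simp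
      then have "2 * L * \<gamma> \<le> 1" unfolding \<gamma>_def by (simp add: power2_eq_square algebra_simps)
      then show ?thesis using L_pos by (simp add: field_simps)
    qed
    then have "2 * \<mu> * \<gamma> \<le> 2 * \<mu> * (1 / (2 * L))" using mu by (intro mult_left_mono) auto
    also have "\<dots> \<le> 1" using muL L_pos by (simp add: field_simps)
    finally have z0: "0 \<le> 1 - 2 * \<mu> * \<gamma>" by simp
    show "let \<zeta> = 1 - 2 * \<mu> * \<alpha> * (1 - L * \<alpha> / 2) in
          0 \<le> \<zeta> \<and> \<zeta> < 1 \<and> (\<forall>k. f (x k) - fstar \<le> \<zeta> ^ k * (f (x 0) - fstar))"
      unfolding e Let_def using PLpart[OF mu PL] mu gpos z0 by simp
  qed
  have part3: "\<forall>k. Min ((\<lambda>l. (norm1 (g (x l)))\<^sup>2) ` {0..k}) \<le> (f (x 0) - fstar) / (\<gamma> * real (k + 1))"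
  proof
    fix k
    define m where "m = Min ((\<lambda>l. (norm1 (g (x l)))\<^sup>2) ` {0..k})"
    have tel: "f (x 0) - f (x (Suc j)) \<ge> \<gamma> * (\<Sum>l\<in>{0..j}. (norm1 (g (x l)))\<^sup>2)" for j
    proof (induction j)
      case 0 then show ?case using step[of 0] by simp
    next
      case (Suc j) then show ?case using step[of "Suc j"] by (simp add: algebra_simps)
    qed
    have "real (k + 1) * m = (\<Sum>l\<in>{0..k}. m)" by simp
    also have "\<dots> \<le> (\<Sum>l\<in>{0..k}. (norm1 (g (x l)))\<^sup>2)"
      unfolding m_def by (intro sum_mono Min_le) auto
    finally have sm: "real (k + 1) * m \<le> (\<Sum>l\<in>{0..k}. (norm1 (g (x l)))\<^sup>2)" .
    have "\<gamma> * (real (k + 1) * m) \<le> \<gamma> * (\<Sum>l\<in>{0..k}. (norm1 (g (x l)))\<^sup>2)"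
      using sm gpos by (intro mult_left_mono) auto
    then have "\<gamma> * (real (k + 1) * m) \<le> f (x 0) - fstar"
      using tel[of k] fstar_min[of "x (Suc k)"] by linarith
    then show "m \<le> (f (x 0) - fstar) / (\<gamma> * real (k + 1))" 
    proof -
      have p: "\<gamma> * real (k + 1) > 0" using gpos by simp
      have "m * (\<gamma> * real (k + 1)) \<le> f (x 0) - fstar" using \<open>\<gamma> * (real (k + 1) * m) \<le> f (x 0) - fstar\<close>
        by (simp add: algebra_simps)
      then show ?thesis using p by (simp add: pos_le_divide_eq)
    qed
  qed
  show ?thesis using part1 part2 part3 unfolding Let_def \<gamma>_def by blast
qed

end
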